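(* If $(k,\alpha)\in\Upsilon$ and $(w_1,w_2,x,g,t)\in\Gamma(k,\alpha)$, then the right infinite word $w_1w_2xt$ is $\alpha$-power free, i.e. $w_1w_2xt\in L^{\mathbb N,R}_{k,\alpha}$.
   Context: $\Sigma_k$ is an alphabet with $k$ letters. For a nonempty finite word $r$ and a rational $\beta\ge 1$ with $\beta|r|$ an integer, the $\beta$-power $r^\beta$ is the word $rr\cdots rt$ of length $\beta|r|$, where $t$ is a prefix of $r$. For rational $\alpha\ge1$, a word is $\alpha$-power free if it has no factor that is a $\beta$-power with $\beta\ge\alpha$, and $\alpha^+$-power free if it has no factor that is a $\beta$-power with $\beta>\alpha$; "$\alpha$" may denote a rational number or a symbol $\alpha^+$. $L_{k,\alpha}$ is the set of finite $\alpha$-power free words over $\Sigma_k$, and $L^{\mathbb N,R}_{k,\alpha}$ the set of right infinite words over $\Sigma_k$ all of whose finite factors lie in $L_{k,\alpha}$. $\Upsilon$ is the set of pairs: $(k,\alpha)$ with $k=3$ and rational $\alpha>2$; $(k,\alpha)$ with $k>3$ and rational $\alpha\ge2$; $(k,\alpha^+)$ with $k\ge3$ and rational $\alpha\ge2$. $\operatorname{occur}(w,s)$ denotes the number of occurrences of a nonempty word $s$ as a factor of $w$. Prefixes of a word include the empty word (and the word itself if finite). For $(k,\alpha)\in\Upsilon$, $(w_1,w_2,x,g,t)\in\Gamma(k,\alpha)$ means: $w_1,w_2,g\in\Sigma_k^*$; $x\in\Sigma_k$; $w_1w_2xg\in L_{k,\alpha}$; $t\in L^{\mathbb N,R}_{k,\alpha}$;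 $\operatorname{occur}(t,x)=0$; $g$ is a prefix of $t$; $\operatorname{occur}(w_2xgy,xgy)=1$, where $y\in\Sigma_k$ is the letter such that $gy$ is a prefix of $t$; and $\operatorname{occur}(w_2,x)\ge\operatorname{occur}(w_1,x)$. *)

theory Defs
  imports Complex_Main "HOL-Library.Sublist"
begin

text \<open>Letters of the alphabet Sigma_k are the naturals 0..k-1; finite words are lists,
  right infinite words are functions nat => nat.\<close>

text \<open>Exponent: either a rational alpha, or the symbol alpha^+.\<close>
datatype expo = Exact rat | Plus rat

definition is_power :: "nat list \<Rightarrow> rat \<Rightarrow> nat list \<Rightarrow> bool" where
  "is_power r \<beta> u \<longleftrightarrow> r \<noteq> [] \<and> \<beta> \<ge> 1 \<and> of_nat (length u) = \<beta> * of_nat (length r) \<and>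
     (\<exists>m t. m \<ge> 1 \<and> prefix t r \<and> u = concat (replicate m r) @ t)"

definition exceeds :: "rat \<Rightarrow> expo \<Rightarrow> bool" where
  "exceeds \<beta> e = (case e of Exact a \<Rightarrow> \<beta> \<ge> a | Plus a \<Rightarrow> \<beta> > a)"

definition power_free :: "expo \<Rightarrow> nat list \<Rightarrow> bool" where
  "power_free e w \<longleftrightarrow> (\<forall>u r \<beta>. sublist u w \<longrightarrow> is_power r \<beta> u \<longrightarrow> \<not> exceeds \<beta> e)"

definition L :: "nat \<Rightarrow> expo \<Rightarrow> nat list set" where
  "L k e = {w. set w \<subseteq> {..<k} \<and> power_free e w}"

definition LinfR :: "nat \<Rightarrow> expo \<Rightarrow> (nat \<Rightarrow> nat) set" where
  "LinfR k e = {t. (\<forall>i. t i < k) \<and> (\<forall>i j. map t [i..<j] \<in> L k e)}"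

definition Upsilon :: "(nat \<times> expo) set" where
  "Upsilon = {(k, Exact a) | k a. (k = 3 \<and> a > 2) \<or> (k > 3 \<and> a \<ge> 2)}
           \<union> {(k, Plus a) | k a. k \<ge> 3 \<and> a \<ge> 2}"

definition occur :: "nat list \<Rightarrow> nat list \<Rightarrow> nat" where
  "occur w s = card {i. i + length s \<le> length w \<and> take (length s) (drop i w) = s}"

definition conc :: "nat list \<Rightarrow> (nat \<Rightarrow> nat) \<Rightarrow> (nat \<Rightarrow> nat)" where
  "conc u t = (\<lambda>i. if i < length u then u ! i else t (i - length u))"

definition Gamma :: "nat \<Rightarrow> expo \<Rightarrow>
    (nat list \<times> nat list \<times> nat \<times> nat list \<times> (nat \<Rightarrow> nat)) set" where
  "Gamma k e = {(w1, w2, x, g, t).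
      set w1 \<subseteq> {..<k} \<and> set w2 \<subseteq> {..<k} \<and> x < k \<and> set g \<subseteq> {..<k} \<and>
      w1 @ w2 @ [x] @ g \<in> L k e \<and>
      t \<in> LinfR k e \<and>
      (\<forall>i. t i \<noteq> x) \<and>
      g = map t [0..<length g] \<and>
      (let y = t (length g) in occur (w2 @ [x] @ g @ [y]) ([x] @ g @ [y]) = 1) \<and>
      occur w2 [x] \<ge> occur w1 [x]}"

end

theory Submission
  imports Defs
begin

lemma sub_upt:
  assumes "sublist u (map f [i..<j])"
  shows "\<exists>s z. s \<le> z \<and> u = map f [s..<z]"
proof -
  obtain ps ss where eq: "map f [i..<j] = ps @ u @ ss" using assms by (auto simp: sublist_def)
  have len: "j - i = length ps + length u + length ss"
    using arg_cong[OF eq, of length] by simp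
  have "u = take (length u) (drop (length ps) (map f [i..<j]))" using eq by simp
  also have "\<dots> = map f [i + length ps..<i + length ps + length u]"
  proof (cases "u = []")
    case True then show ?thesis by simp
  next
    case False
    then have "length u > 0" by simp
    then have "i + length ps + length u \<le> j" using len by linarith
    then show ?thesis by (simp add: take_map drop_map)
  qed
  finally show ?thesis using len by (intro exI[of _ "i + length ps"] exI[of _ "i + length ps + length u"]) auto
qed

lemma upt_sublist:
  assumes "s \<le> z" "z \<le> N"
  shows "sublist (map f [s..<z]) (map f [0..<N])"
proof -
  have "[0..<N] = [0..<s] @ [s..<z] @ [z..<N]"
    using assms by (metis le_trans upt_add_eq_append zero_le le_Suc_ex)
  then show ?thesis unfolding sublist_def by (metis map_append)
qed

lemma power_per:
  assumes "is_power r \<beta> u" "i + length r < length u"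
  shows "u ! i = u ! (i + length r)"
proof -
  obtain m t' where mt: "prefix t' r" "u = concat (replicate m r) @ t'"
    using assms(1) unfolding is_power_def by blast
  define C' where "C' = concat (replicate m r)"
  have p1: "prefix u (C' @ r)" using mt by (simp add: C'_def)
  have eqC: "C' @ r = r @ C'" unfolding C'_def
    by (induction m) auto
  have lu: "length u \<le> length C' + length r" using prefix_length_le[OF p1] by simp
  have "u ! i = (C' @ r) ! i" using p1 assms(2) by (metis prefix_def nth_append add_lessD1 )
  also have "\<dots> = C' ! i" using assms(2) lu by (simp add: nth_append)
  also have "\<dots> = (r @ C') ! (i + length r)" by (simp add: nth_append)
  also have "\<dots> = u ! (i + length r)" using p1 assms(2) eqC by (metis prefix_def nth_append)
  finally show ?thesis .
qed

lemma power_len: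
  assumes "is_power r \<beta> u" "\<beta> \<ge> 2"
  shows "2 * length r \<le> length u"
proof -
  have "of_nat (length u) = \<beta> * of_nat (length r)" using assms(1) by (simp add: is_power_def)
  moreover have "\<beta> * of_nat (length r) \<ge> 2 * (of_nat (length r) :: rat)"
    using assms(2) by (simp add: mult_right_mono)
  ultimately have "(of_nat (2 * length r) :: rat) \<le> of_nat (length u)" by simp
  then show ?thesis by (simp only: of_nat_le_iff)
qed

lemma occur_single: "occur w [c] = card {j. j < length w \<and> w ! j = c}"
proof -
  have "{i. i + length [c] \<le> length w \<and> take (length [c]) (drop i w) = [c]} = {j. j < length w \<and> w ! j = c}"
  proof (intro set_eqI iffI)
    fix j assume "j \<in> {i. i + length [c] \<le> length w \<and> take (length [c]) (drop i w) = [c]}"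
    then show "j \<in> {j. j < length w \<and> w ! j = c}"
      by (auto simp: Cons_nth_drop_Suc[symmetric])
  next
    fix j assume "j \<in> {j. j < length w \<and> w ! j = c}"
    then show "j \<in> {i. i + length [c] \<le> length w \<and> take (length [c]) (drop i w) = [c]}"
      by (auto simp: Cons_nth_drop_Suc[symmetric])
  qed
  then show ?thesis unfolding occur_def by simp
qed


theorem mainTheorem3:
  assumes "(k, e) \<in> Upsilon"
    and "(w1, w2, x, g, t) \<in> Gamma k e"
  shows "conc (w1 @ w2 @ [x]) t \<in> LinfR k e"
proof -
  have hw1: "set w1 \<subseteq> {..<k}" and hw2: "set w2 \<subseteq> {..<k}" and hx: "x < k"
    and hL: "w1 @ w2 @ [x] @ g \<in> L k e" and ht: "t \<in> LinfR k e"
    and htx: "\<forall>i. t i \<noteq> x" and hg: "g = map t [0..<length g]"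
    and hocc: "occur (w2 @ [x] @ g @ [t (length g)]) ([x] @ g @ [t (length g)]) = 1"
    and hcnt: "occur w2 [x] \<ge> occur w1 [x]"
    using assms(2) by (auto simp: Gamma_def Let_def)
  define W where "W = conc (w1 @ w2 @ [x]) t"
  define a where "a = length w1"
  define p where "p = length w1 + length w2"
  define y where "y = t (length g)"
  define V where "V = w1 @ w2 @ [x] @ g @ [y]"
  have lenV: "length V = p + 2 + length g" by (simp add: V_def p_def)
  have Whigh: "\<And>i. p < i \<Longrightarrow> W i = t (i - p - 1)"
    by (simp add: W_def conc_def p_def)
  have Wnx: "\<And>i. p < i \<Longrightarrow> W i \<noteq> x" using Whigh htx by simp
  have Vfact: "\<And>i. i < p + 2 + length g \<Longrightarrow> W i = V ! i"
  proof -
    fix i assume i: "i < p + 2 + length g"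
    show "W i = V ! i"
    proof (cases "i < p + 1")
      case True
      then show ?thesis by (simp add: W_def conc_def V_def p_def nth_append)
    next
      case False
      then have "W i = t (i - p - 1)" using Whigh by simp
      moreover have "V ! i = (g @ [y]) ! (i - p - 1)"
      proof -
        have "V = (w1 @ w2 @ [x]) @ (g @ [y])" by (simp add: V_def)
        moreover have "length (w1 @ w2 @ [x]) = p + 1" by (simp add: p_def)
        ultimately show ?thesis using False by (simp only: nth_append) simp
      qed
      moreover have "(g @ [y]) ! (i - p - 1) = t (i - p - 1)"
      proof (cases "i - p - 1 < length g")
        case True
        have "g ! (i - p - 1) = map t [0..<length g] ! (i - p - 1)" using hg by (rule arg_cong)
        then have "g ! (i - p - 1) = t (i - p - 1)" using True by (simp del: upt_Suc)
        then show ?thesis using True by (simp add: nth_append)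
      next
        case False
        then have "i - p - 1 = length g" using i by simp
        then show ?thesis by (simp add: y_def nth_append)
      qed
      ultimately show ?thesis by simp
    qed
  qed
  have pref: "map W [0..<p + 1 + length g] = w1 @ w2 @ [x] @ g"
  proof (rule nth_equalityI)
    show "length (map W [0..<p + 1 + length g]) = length (w1 @ w2 @ [x] @ g)" by (simp add: p_def)
    fix i assume "i < length (map W [0..<p + 1 + length g])"
    then have i: "i < p + 1 + length g" by simp
    then have "W i = V ! i" using Vfact by simp
    also have "\<dots> = (w1 @ w2 @ [x] @ g) ! i"
    proof -
      have "V = (w1 @ w2 @ [x] @ g) @ [y]" by (simp add: V_def)
      moreover have "length (w1 @ w2 @ [x] @ g) = p + 1 + length g" by (simp add: p_def)
      ultimately show ?thesis using i by (simp only: nth_append) simp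
    qed
    moreover have "map W [0..<p + 1 + length g] ! i = W i" using i by (simp del: upt_Suc)
    ultimately show "map W [0..<p + 1 + length g] ! i = (w1 @ w2 @ [x] @ g) ! i" by simp
  qed
  have beta2: "\<And>\<beta>. exceeds \<beta> e \<Longrightarrow> \<beta> \<ge> 2" using assms(1)
    by (auto simp: Upsilon_def exceeds_def)
  have key: "\<And>s z r \<beta>. s \<le> z \<Longrightarrow> is_power r \<beta> (map W [s..<z]) \<Longrightarrow> exceeds \<beta> e \<Longrightarrow> False"
  proof -
    fix s z r \<beta> assume sz: "s \<le> z" and ip: "is_power r \<beta> (map W [s..<z])" and ex: "exceeds \<beta> e"
    define q where "q = length r"
    have "r \<noteq> []" using ip by (simp add: is_power_def)
    then have q1: "q \<ge> 1" by (simp add: q_def Suc_le_eq)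
    have len: "2 * q \<le> z - s" using power_len[OF ip beta2[OF ex]] by (simp add: q_def)
    have per: "\<And>i. s \<le> i \<Longrightarrow> i + q < z \<Longrightarrow> W i = W (i + q)"
    proof -
      fix i assume "s \<le> i" "i + q < z"
      then have "W (s + (i - s)) = W (s + (i - s + q))"
        using power_per[OF ip, of "i - s"] by (simp add: q_def)
      then show "W i = W (i + q)" using \<open>s \<le> i\<close> by simp
    qed
    show False
    proof (cases "z \<le> p + 1 + length g")
      case True
      have "sublist (map W [s..<z]) (w1 @ w2 @ [x] @ g)"
        using upt_sublist[OF sz True, of W] pref by simp
      then show False using hL ip ex by (auto simp: L_def power_free_def)
    next
      case zbig: False
      show False
      proof (cases "p < s")
        case True
        have "map W [s..<z] = map t [s - p - 1..<z - p - 1]"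
          using True sz by (auto intro!: nth_equalityI simp: Whigh)
        moreover have "map t [s - p - 1..<z - p - 1] \<in> L k e" using ht by (simp add: LinfR_def)
        ultimately show False using ip ex by (auto simp: L_def power_free_def)
      next
        case sp: False
        have Wp: "W p = x" using Vfact[of p] by (simp add: V_def p_def nth_append)
        have zpq: "z \<le> p + q"
        proof (rule ccontr)
          assume "\<not> z \<le> p + q"
          then have "W p = W (p + q)" using per[of p] sp by simp
          then show False using Wp Wnx[of "p + q"] q1 by simp
        qed
        have sq: "s + q \<le> p" using len zpq sz by linarith
        have pa: "p < a + q"
        proof (rule ccontr)
          assume "\<not> p < a + q"
          then have apq: "a \<le> p - q" by simp
          define L2 where "L2 = w2 @ [x] @ g @ [y]"
          define pat where "pat = [x] @ g @ [y]"
          define S where "S = {i. i + length pat \<le> length L2 \<and> take (length pat) (drop i L2) = pat}"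
          have cS: "card S = 1" using hocc by (simp add: S_def L2_def pat_def occur_def y_def)
          have L2W: "\<And>i. i < length L2 \<Longrightarrow> L2 ! i = W (a + i)"
          proof -
            fix i assume "i < length L2"
            then have "a + i < p + 2 + length g" by (simp add: L2_def a_def p_def)
            then have "W (a + i) = V ! (a + i)" using Vfact by simp
            then show "L2 ! i = W (a + i)" by (simp add: V_def L2_def a_def nth_append)
          qed
          have lL2: "length L2 = length w2 + length pat" by (simp add: L2_def pat_def)
          have pat_eq: "drop (length w2) L2 = pat" by (simp add: L2_def pat_def)
          have m1: "length w2 \<in> S" using pat_eq lL2 by (simp add: S_def)
          have m2: "p - q - a \<in> S"
          proof -
            have b: "p - q - a + length pat \<le> length L2" using lL2 q1 apq by (simp add: p_def a_def)
            have "take (length pat) (drop (p - q - a) L2) = pat"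
            proof (rule nth_equalityI)
              show "length (take (length pat) (drop (p - q - a) L2)) = length pat" using b by simp
              fix j assume "j < length (take (length pat) (drop (p - q - a) L2))"
              then have j: "j < length pat" by simp
              have "take (length pat) (drop (p - q - a) L2) ! j = L2 ! (p - q - a + j)"
                using j b by simp
              also have "\<dots> = W (a + (p - q - a + j))" by (rule L2W) (use b j in simp)
              also have "\<dots> = W (p - q + j)"
              proof -
                have "a + (p - q - a + j) = p - q + j" using apq by simp
                then show ?thesis by (metis (no_types))
              qed
              also have "\<dots> = W (p + j)"
              proof -
                have "p + j < z" using j zbig by (simp add: pat_def)
                then have "W (p - q + j) = W (p - q + j + q)" using per[of "p - q + j"] sq by simp
                then show ?thesis using sq by simp
              qed
              also have "\<dots> = L2 ! (length w2 + j)" using L2W[of "length w2 + j"] lL2 j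
                by (simp add: p_def a_def add.assoc)
              also have "\<dots> = pat ! j" using pat_eq j lL2 by (metis nth_drop le_add1 )
              finally show "take (length pat) (drop (p - q - a) L2) ! j = pat ! j" .
            qed
            then show ?thesis using b by (simp add: S_def)
          qed
          have ne: "p - q - a \<noteq> length w2" using q1 apq sq unfolding p_def a_def by linarith
          have fin: "finite S" by (rule finite_subset[of _ "{..length L2}"]) (auto simp: S_def)
          have "card {length w2, p - q - a} \<le> card S" using m1 m2 fin by (intro card_mono) auto
          then show False using ne cS by simp
        qed
        define D where "D = {j. j < length w2 \<and> w2 ! j = x}"
        define T where "T = {j. j < length w1 \<and> w1 ! j = x}"
        have good: "\<And>j. j \<in> insert (length w2) D \<Longrightarrow> s + q \<le> a + j \<and> a + j - q \<in> T"
        proof -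
          fix j assume jD: "j \<in> insert (length w2) D"
          have ajp: "a + j \<le> p" using jD by (auto simp: D_def a_def p_def)
          have Wx: "W (a + j) = x"
          proof (cases "j = length w2")
            case True then show ?thesis using Wp by (simp add: a_def p_def)
          next
            case False
            then have "j < length w2" "w2 ! j = x" using jD by (auto simp: D_def)
            moreover have "W (a + j) = V ! (a + j)" using Vfact ajp by simp
            ultimately show ?thesis by (simp add: V_def a_def nth_append)
          qed
          have big: "z \<le> a + j + q"
          proof (rule ccontr)
            assume "\<not> z \<le> a + j + q"
            then have "W (a + j) = W (a + j + q)" using per[of "a + j"] sq pa by simp
            then show False using Wx Wnx[of "a + j + q"] pa by simp
          qed
          have 1: "s + q \<le> a + j" using big len sz by linarith
          have "W (a + j - q) = W (a + j - q + q)" using per[of "a + j - q"] 1 ajp zbig by simp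
          then have "W (a + j - q) = x" using 1 Wx by simp
          moreover have "a + j - q < a" using ajp pa q1 1 by linarith
          moreover have "W (a + j - q) = V ! (a + j - q)" using Vfact \<open>a + j - q < a\<close>
            by (simp add: a_def p_def)
          ultimately have "w1 ! (a + j - q) = x" "a + j - q < length w1"
            by (simp_all add: V_def a_def nth_append)
          then show "s + q \<le> a + j \<and> a + j - q \<in> T" using 1 by (simp add: T_def)
        qed
        have inj: "inj_on (\<lambda>j. a + j - q) (insert (length w2) D)"
        proof (rule inj_onI)
          fix u v assume "u \<in> insert (length w2) D" "v \<in> insert (length w2) D" "a + u - q = a + v - q"
          moreover have "s + q \<le> a + u" "s + q \<le> a + v" using good \<open>u \<in> _\<close> \<open>v \<in> _\<close> by auto
          ultimately show "u = v" by linarith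
        qed
        have "card (insert (length w2) D) \<le> card T"
          by (rule card_inj_on_le[OF inj]) (use good in \<open>auto simp: T_def\<close>)
        moreover have "card (insert (length w2) D) = card D + 1"
          by (simp add: D_def)
        moreover have "occur w2 [x] = card D" "occur w1 [x] = card T"
          by (simp_all add: occur_single D_def T_def)
        ultimately show False using hcnt by simp
      qed
    qed
  qed
  have Wk: "\<And>i. W i < k"
  proof -
    fix i show "W i < k"
    proof (cases "i < p + 1")
      case True
      then have "W i = (w1 @ w2 @ [x]) ! i" by (simp add: W_def conc_def p_def)
      moreover have "(w1 @ w2 @ [x]) ! i \<in> set (w1 @ w2 @ [x])" using True by (intro nth_mem) (simp add: p_def)
      moreover have "set (w1 @ w2 @ [x]) \<subseteq> {..<k}" using hw1 hw2 hx by auto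
      ultimately show ?thesis by auto
    next
      case False
      then show ?thesis using Whigh[of i] ht by (simp add: LinfR_def)
    qed
  qed
  show ?thesis unfolding W_def[symmetric] LinfR_def L_def power_free_def
  proof (intro CollectI conjI allI impI)
    fix i show "W i < k" by (rule Wk)
  next
    fix i j show "set (map W [i..<j]) \<subseteq> {..<k}" using Wk by auto
  next
    fix i j u r \<beta> assume "sublist u (map W [i..<j])" "is_power r \<beta> u"
    then obtain s z where "s \<le> z" "u = map W [s..<z]" using sub_upt by blast
    then show "\<not> exceeds \<beta> e" using key \<open>is_power r \<beta> u\<close> by blast
  qed
qed

end
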